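(* Let $x_1,x_2,\dots$ be a sequence of vectors in $\mathbb{R}^n$. Suppose there is a function $C:\mathbb{N}^n\to\mathbb{R}\setminus\{0\}$ such that for every $m\in\mathbb{N}$, $\sum_{\substack{m_1+\cdots+m_n=m\\ 0<m_1<\cdots<m_n}} C(m_1,\dots,m_n)\det[x_{m_1},x_{m_2},\dots,x_{m_n}]=0$. Then the sequence $(x_i)$ is contained in a proper linear subspace of $\mathbb{R}^n$.
   Context: $[x_{m_1},\dots,x_{m_n}]$ denotes the $n\times n$ matrix with these columns; the sum is over integer tuples. *)

theory Defs
  imports "HOL-Analysis.Analysis"
begin

end

theory Submission
  imports Defs
begin

lemma greedy_step:
  fixes x :: "nat \<Rightarrow> real ^ 'n::finite"
  defines "G \<equiv> {j. 1 \<le> j \<and> x j \<notin> span (x ` {i. 1 \<le> i \<and> i < j})}"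
  shows "x ` {i. 1 \<le> i \<and> i < a} \<subseteq> span (x ` (G \<inter> {..<a})) \<and>
         independent (x ` (G \<inter> {..<a})) \<and> inj_on x (G \<inter> {..<a})"
proof (induction a)
  case 0
  then show ?case by (auto simp: independent_empty)
next
  case (Suc a)
  have Gmem: "j \<in> G \<longleftrightarrow> 1 \<le> j \<and> x j \<notin> span (x ` {i. 1 \<le> i \<and> i < j})" for j
    unfolding assms by (simp only: mem_Collect_eq)
  have G1: "G \<inter> {..<a} \<subseteq> {i. 1 \<le> i \<and> i < a}" using Gmem by auto
  have IH1: "x ` {i. 1 \<le> i \<and> i < a} \<subseteq> span (x ` (G \<inter> {..<a}))"
    and IH2: "independent (x ` (G \<inter> {..<a}))" and IH3: "inj_on x (G \<inter> {..<a})"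
    using Suc.IH by auto
  have IH1': "span (x ` {i. 1 \<le> i \<and> i < a}) \<subseteq> span (x ` (G \<inter> {..<a}))"
    using IH1 by (meson span_minimal subspace_span)
  show ?case
  proof (cases "a = 0")
    case True
    have e1: "G \<inter> {..<Suc a} = {}" using True Gmem by fastforce
    have e2: "{i. 1 \<le> i \<and> i < Suc a} = {}" using True by auto
    show ?thesis unfolding e1 e2 by (simp add: independent_empty)
  next
    case a0: False
    then have a1: "1 \<le> a" by simp
    have e2: "{i. 1 \<le> i \<and> i < Suc a} = insert a {i. 1 \<le> i \<and> i < a}" using a0 by auto
    show ?thesis
    proof (cases "a \<in> G")
      case True
      have e1: "G \<inter> {..<Suc a} = insert a (G \<inter> {..<a})" using True by auto
      have nin: "x a \<notin> span (x ` (G \<inter> {..<a}))"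
      proof
        assume h: "x a \<in> span (x ` (G \<inter> {..<a}))"
        have sub: "span (x ` (G \<inter> {..<a})) \<subseteq> span (x ` {i. 1 \<le> i \<and> i < a})"
          using G1 by (intro span_mono image_mono)
        have "x a \<in> span (x ` {i. 1 \<le> i \<and> i < a})" using sub h by (rule subsetD)
        then show False using True Gmem[of a] by simp
      qed
      have sub2: "x ` (G \<inter> {..<a} - {a}) \<subseteq> span (x ` (G \<inter> {..<a}))"
        by (meson Diff_subset image_mono order_trans span_superset)
      have nin2: "x a \<notin> x ` (G \<inter> {..<a} - {a})"
      proof
        assume "x a \<in> x ` (G \<inter> {..<a} - {a})"
        then have "x a \<in> span (x ` (G \<inter> {..<a}))" using sub2 by (rule subsetD[rotated])
        then show False using nin by contradiction
      qed
      have s1: "x a \<in> span (insert (x a) (x ` (G \<inter> {..<a})))" by (rule span_base) simp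
      have s2: "span (x ` (G \<inter> {..<a})) \<subseteq> span (insert (x a) (x ` (G \<inter> {..<a})))"
        by (rule span_mono) (rule subset_insertI)
      have p1: "x ` {i. 1 \<le> i \<and> i < Suc a} \<subseteq> span (x ` (G \<inter> {..<Suc a}))"
        unfolding e1 e2 image_insert insert_subset using s1 order_trans[OF IH1 s2] by (rule conjI)
      have p2: "independent (x ` (G \<inter> {..<Suc a}))"
        unfolding e1 image_insert by (rule independent_insertI[OF nin IH2])
      have p3: "inj_on x (G \<inter> {..<Suc a})"
        unfolding e1 inj_on_insert using IH3 nin2 by (rule conjI)
      show ?thesis using p1 p2 p3 by (intro conjI)
    next
      case False
      have e1: "G \<inter> {..<Suc a} = G \<inter> {..<a}" using False by (auto simp: less_Suc_eq)
      have "x a \<in> span (x ` {i. 1 \<le> i \<and> i < a})" using False a1 Gmem[of a] by simp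
      then have xa: "x a \<in> span (x ` (G \<inter> {..<a}))" using IH1' by (rule subsetD[rotated])
      have p1: "x ` {i. 1 \<le> i \<and> i < Suc a} \<subseteq> span (x ` (G \<inter> {..<Suc a}))"
        unfolding e1 e2 image_insert insert_subset using xa IH1 by (rule conjI)
      show ?thesis using p1 IH2 IH3 unfolding e1 by (intro conjI)
    qed
  qed
qed

lemma main_ineq:
  fixes x :: "nat \<Rightarrow> real ^ ('n::{finite,wellorder})"
    and g t :: "'n \<Rightarrow> nat"
  assumes Sg: "\<And>k. x ` {i. 1 \<le> i \<and> i < g k} \<subseteq> span (x ` g ` {..<k})"
    and tm: "strict_mono t" and tpos: "\<And>i. 0 < t i"
    and dnz: "det (transpose (\<chi> j. x (t j))) \<noteq> 0"
  shows "g k \<le> t k"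
proof (rule ccontr)
  assume "\<not> g k \<le> t k"
  then have lt: "t k < g k" by simp
  have "rank (\<chi> j. x (t j)) = CARD('n)"
    using dnz det_eq_0_rank[of "transpose (\<chi> j. x (t j))"] rank_transpose rank_bound[of "\<chi> j. x (t j)"]
    by (metis le_antisym min.idem not_le)
  moreover have "rows (\<chi> j. x (t j)) = range (\<lambda>j. x (t j))"
    by (auto simp: rows_def row_def)
  ultimately have dimr: "dim (range (\<lambda>j. x (t j))) = CARD('n)"
    by (simp add: row_rank_def)
  define W where "W = x ` g ` {..<k} \<union> (\<lambda>j. x (t j)) ` {k<..}"
  have "range (\<lambda>j. x (t j)) \<subseteq> span W"
  proof clarify
    fix j
    show "x (t j) \<in> span W"
    proof (cases "k < j")
      case True
      then show ?thesis unfolding W_def by (intro span_base) auto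
    next
      case False
      then have "t j \<le> t k" using tm by (metis not_less strict_mono_less_eq)
      then have "x (t j) \<in> x ` {i. 1 \<le> i \<and> i < g k}" using lt tpos[of j] by force
      then have "x (t j) \<in> span (x ` g ` {..<k})" using Sg by blast
      moreover have "span (x ` g ` {..<k}) \<subseteq> span W" unfolding W_def by (intro span_mono) auto
      ultimately show ?thesis by blast
    qed
  qed
  then have "dim (range (\<lambda>j. x (t j))) \<le> card W" by (intro dim_le_card) (auto simp: W_def)
  also have "card W \<le> card (x ` g ` {..<k}) + card ((\<lambda>j. x (t j)) ` {k<..})"
    unfolding W_def by (rule card_Un_le)
  also have "\<dots> \<le> card {..<k} + card {k<..}"
  proof (rule add_mono)
    show "card (x ` g ` {..<k}) \<le> card {..<k}"
      by (meson card_image_le finite finite_imageI order_trans)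
    show "card ((\<lambda>j. x (t j)) ` {k<..}) \<le> card {k<..}"
      by (meson card_image_le finite)
  qed
  also have "\<dots> = card ({..<k} \<union> {k<..})"
    by (rule card_Un_disjoint[symmetric]) auto
  also have "{..<k} \<union> {k<..} = UNIV - {k}" by auto
  also have "card (UNIV - {k}) < CARD('n)"
    by (simp add: card_Diff_singleton)
  finally show False using dimr by simp
qed


theorem lemma1:
  fixes x :: "nat \<Rightarrow> real ^ ('n::{finite,wellorder})"
    and C :: "('n::{finite,wellorder} \<Rightarrow> nat) \<Rightarrow> real"
  assumes C_nonzero: "\<And>t. C t \<noteq> 0"
    and sums_zero: "\<And>m::nat.
      (\<Sum>t\<in>{t :: 'n::{finite,wellorder} \<Rightarrow> nat. strict_mono t \<and> (\<forall>i. 0 < t i) \<and> sum t UNIV = m}.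
          C t * det (transpose (\<chi> j. x (t j)))) = 0"
  shows "\<exists>V :: (real ^ 'n::{finite,wellorder}) set. subspace V \<and> V \<noteq> UNIV \<and> (\<forall>i\<ge>1. x i \<in> V)"
proof (rule ccontr)
  assume nex: "\<not> ?thesis"
  let ?X = "x ` {i. 1 \<le> i}"
  have hspan: "span ?X = UNIV"
  proof (rule ccontr)
    assume "span ?X \<noteq> UNIV"
    moreover have "\<forall>i\<ge>1. x i \<in> span ?X" by (auto intro: span_base)
    ultimately show False using nex subspace_span by blast
  qed
  define G where "G = {j. 1 \<le> j \<and> x j \<notin> span (x ` {i. 1 \<le> i \<and> i < j})}"
  note gs = greedy_step[of x, folded G_def]
  have SG: "span (x ` {i. 1 \<le> i \<and> i < a}) = span (x ` (G \<inter> {..<a}))" for a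
  proof
    show "span (x ` {i. 1 \<le> i \<and> i < a}) \<subseteq> span (x ` (G \<inter> {..<a}))"
      using gs[of a] by (intro span_minimal) (auto simp: subspace_span)
    have "G \<inter> {..<a} \<subseteq> {i. 1 \<le> i \<and> i < a}" by (auto simp: G_def)
    then show "span (x ` (G \<inter> {..<a})) \<subseteq> span (x ` {i. 1 \<le> i \<and> i < a})"
      by (intro span_mono image_mono)
  qed
  have dimU: "dim (UNIV :: (real^('n::{finite,wellorder})) set) = card (UNIV :: 'n set)"
    by (metis dim_vec_eq vec_dim_card)
  have finG: "finite G"
  proof (rule ccontr)
    assume "infinite G"
    then obtain F where F: "F \<subseteq> G" "finite F" "card F = Suc (card (UNIV :: 'n set))"
      using infinite_arbitrarily_large by blast
    then have Fne: "F \<noteq> {}" by auto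
    define a where "a = Suc (Max F)"
    have FG: "F \<subseteq> G \<inter> {..<a}" using F Fne by (auto simp: a_def le_imp_less_Suc)
    have "card F \<le> card (G \<inter> {..<a})" by (intro card_mono FG) auto
    also have "\<dots> = card (x ` (G \<inter> {..<a}))" using gs[of a] card_image by metis
    also have "\<dots> = dim (x ` (G \<inter> {..<a}))" using gs[of a] dim_eq_card_independent by metis
    also have "\<dots> \<le> card (UNIV :: 'n set)" by (rule dim_subset_UNIV_cart)
    finally show False using F by simp
  qed
  obtain a0 where a0: "G \<subseteq> {..<a0}" using finG finite_nat_bounded by blast
  have Ga0: "G \<inter> {..<a0} = G" using a0 by blast
  have indG: "independent (x ` G)" and injG: "inj_on x G" using gs[of a0] Ga0 by auto
  have spanG: "span (x ` G) = UNIV"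
  proof -
    have "?X \<subseteq> span (x ` G)"
    proof clarify
      fix i :: nat assume "1 \<le> i"
      then have "x i \<in> span (x ` {j. 1 \<le> j \<and> j < Suc i})" by (intro span_base) auto
      also have "\<dots> = span (x ` (G \<inter> {..<Suc i}))" by (rule SG)
      also have "\<dots> \<subseteq> span (x ` G)" by (intro span_mono) auto
      finally show "x i \<in> span (x ` G)" .
    qed
    then have "span ?X \<subseteq> span (x ` G)" by (simp add: span_minimal)
    then show ?thesis using hspan by auto
  qed
  have dimG: "dim (x ` G) = card (UNIV :: 'n set)"
    by (metis dimU dim_span spanG)
  have cardG: "card G = card (UNIV :: 'n set)"
  proof -
    have "card G = card (x ` G)" using injG card_image by metis
    also have "\<dots> = dim (x ` G)" using indG dim_eq_card_independent by metis
    finally show ?thesis using dimG by simp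
  qed
  define r where "r k = card {j::'n. j < k}" for k
  define L where "L = sorted_list_of_set G"
  define g where "g k = L ! r k" for k
  have lenL: "length L = card (UNIV :: 'n set)" using cardG finG by (simp add: L_def)
  have setL: "set L = G" using finG by (simp add: L_def)
  have sL: "sorted_wrt (<) L" unfolding L_def by (rule strict_sorted_list_of_set)
  have rlt: "r k < card (UNIV :: 'n set)" for k
    unfolding r_def by (intro psubset_card_mono) auto
  have rmono: "strict_mono r"
  proof (rule strict_monoI)
    fix a b :: 'n assume ab: "a < b"
    have "{j. j < a} \<subset> {j. j < b}" using ab by auto
    then show "r a < r b" unfolding r_def by (intro psubset_card_mono) auto
  qed
  have rsurj: "range r = {..<card (UNIV :: 'n set)}"
  proof (rule card_subset_eq)
    show "range r \<subseteq> {..<card (UNIV :: 'n set)}" using rlt by auto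
    have "inj r" using rmono strict_mono_imp_inj_on by blast
    then show "card (range r) = card {..<card (UNIV :: 'n set)}" by (simp add: card_image)
  qed simp
  have gmono: "strict_mono g"
  proof (rule strict_monoI)
    fix a b :: 'n assume ab: "a < b"
    then have "r a < r b" using rmono strict_monoD by blast
    then show "g a < g b" unfolding g_def
      using sorted_wrt_nth_less[OF sL \<open>r a < r b\<close>] rlt[of b] lenL by simp
  qed
  have gG: "g k \<in> G" for k
  proof -
    have "r k < length L" using rlt[of k] lenL by simp
    then have "L ! r k \<in> set L" by (rule nth_mem)
    then show ?thesis unfolding g_def setL .
  qed
  have Gg: "\<exists>k. j = g k" if "j \<in> G" for j
  proof -
    have "j \<in> set L" using that setL by simp
    then obtain i where i: "i < length L" "L ! i = j" by (auto simp: in_set_conv_nth)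
    then have "i \<in> range r" using rsurj lenL by simp
    then obtain k where "i = r k" by blast
    then show ?thesis using i by (auto simp: g_def)
  qed
  have Sg: "x ` {i. 1 \<le> i \<and> i < g k} \<subseteq> span (x ` g ` {..<k})" for k
  proof -
    have "G \<inter> {..<g k} \<subseteq> g ` {..<k}"
    proof
      fix j assume j: "j \<in> G \<inter> {..<g k}"
      then obtain k' where k': "j = g k'" using Gg by blast
      have "k' < k"
      proof (rule ccontr)
        assume "\<not> k' < k"
        then have "g k \<le> g k'" using gmono by (simp add: strict_mono_less_eq)
        then show False using j k' by simp
      qed
      then show "j \<in> g ` {..<k}" using k' by auto
    qed
    then have "span (x ` (G \<inter> {..<g k})) \<subseteq> span (x ` g ` {..<k})"
      by (intro span_mono image_mono)
    then show ?thesis using gs[of "g k"] by blast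
  qed
  have rowsg: "range (\<lambda>j. x (g j)) = x ` G"
  proof
    show "range (\<lambda>j. x (g j)) \<subseteq> x ` G" using gG by auto
    show "x ` G \<subseteq> range (\<lambda>j. x (g j))"
    proof
      fix v assume "v \<in> x ` G"
      then obtain j where j: "j \<in> G" "v = x j" by blast
      then obtain k where "j = g k" using Gg by blast
      then show "v \<in> range (\<lambda>j. x (g j))" using j by simp
    qed
  qed
  have "rows (\<chi> j. x (g j)) = range (\<lambda>j. x (g j))"
    by (auto simp: rows_def row_def)
  then have "rank (\<chi> j. x (g j)) = card (UNIV :: 'n set)"
    by (simp add: row_rank_def rowsg dimG)
  then have detg: "det (transpose (\<chi> j. x (g j))) \<noteq> 0"
    using det_eq_0_rank rank_transpose by (metis less_irrefl)
  define m where "m = sum g UNIV"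
  define A where "A = {t :: 'n \<Rightarrow> nat. strict_mono t \<and> (\<forall>i. 0 < t i) \<and> sum t UNIV = m}"
  have finA: "finite A"
  proof (rule finite_subset)
    show "A \<subseteq> PiE (UNIV :: 'n set) (\<lambda>_. {..m})"
    proof
      fix t assume "t \<in> A"
      then have "t i \<le> m" for i unfolding A_def using member_le_sum[of i UNIV t] by auto
      then show "t \<in> PiE (UNIV :: 'n set) (\<lambda>_. {..m})" by (auto simp: PiE_UNIV_domain)
    qed
    show "finite (PiE (UNIV :: 'n set) (\<lambda>_. {..m}))" by (intro finite_PiE) auto
  qed
  have G1: "1 \<le> j" if "j \<in> G" for j using that unfolding G_def by blast
  have gpos: "0 < g k" for k using G1[OF gG[of k]] by simp
  have gA: "g \<in> A" unfolding A_def m_def using gmono gpos by auto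
  have others: "C t * det (transpose (\<chi> j. x (t j))) = 0" if t: "t \<in> A - {g}" for t
  proof (rule ccontr)
    assume "C t * det (transpose (\<chi> j. x (t j))) \<noteq> 0"
    then have dnz: "det (transpose (\<chi> j. x (t j))) \<noteq> 0" by auto
    have tm: "strict_mono t" and tpos: "\<And>i. 0 < t i" and ts: "sum t UNIV = m"
      using t by (auto simp: A_def)
    have le: "g k \<le> t k" for k by (rule main_ineq[OF Sg tm tpos dnz])
    have "t \<noteq> g" using t by simp
    then obtain k where "g k \<noteq> t k" by (metis ext)
    then have "g k < t k" using le[of k] by simp
    then have "sum g UNIV < sum t UNIV"
      using le by (intro sum_strict_mono_ex1) auto
    then show False using ts by (simp add: m_def)
  qed
  have "(\<Sum>t\<in>A. C t * det (transpose (\<chi> j. x (t j)))) = C g * det (transpose (\<chi> j. x (g j)))"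
  proof -
    have "(\<Sum>t\<in>A - {g}. C t * det (transpose (\<chi> j. x (t j)))) = 0"
      by (intro sum.neutral ballI others)
    then show ?thesis
      using sum.remove[OF finA gA, of "\<lambda>t. C t * det (transpose (\<chi> j. x (t j)))"] by simp
  qed
  moreover have "(\<Sum>t\<in>A. C t * det (transpose (\<chi> j. x (t j)))) = 0"
    using sums_zero[of m] by (simp add: A_def)
  ultimately show False using C_nonzero[of g] detg by simp
qed

end
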